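(* Let $v,q\ge 2$, $m,s\ge1$ and $R\ge 0$ be integers with $ms-R\ge 2$. Then $$K_{vq}^{RT}(m,s,R)\le OCAN(ms-R,m,s,v)\, K_{q}^{RT}(m,s,R).$$
   Context: For positive integers $m,s$, the RT poset $[m\times s]$ is the set $\{1,\ldots,ms\}$ partitioned into $m$ blocks $B_i=\{is+1,\ldots,(i+1)s\}$; each block is a chain under the usual order of the integers, and elements of different blocks are incomparable. An ideal is a down-closed subset; an anti-ideal is the complement of an ideal; $\langle A\rangle$ denotes the smallest ideal containing $A$. For $x,y\in\mathbb{Z}_q^{ms}$, $d_{RT}(x,y)=|\langle\{i:x_i\neq y_i\}\rangle|$. A code $C\subseteq \mathbb{Z}_q^{ms}$ is an $R$-covering if every $x\in\mathbb{Z}_q^{ms}$ has some $c\in C$ with $d_{RT}(x,c)\le R$; $K_q^{RT}(m,s,R)$ is the smallest size of an $R$-covering. An ordered covering array $OCA(N;t,m,s,v)$ ($2\le t\le ms$) is an $N\times ms$ array over an alphabet of size $v$ with columns labeled by the elements of $[m\times s]$ such that for every anti-ideal $J$ of size $t$, every $t$-tuple over the alphabet appears as a row of the $N\times t$ subarray formed by the columns labeled by $J$; $OCAN(t,m,s,v)$ is the least such $N$. *)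

theory Defs
  imports Main
begin

(* RT poset [m x s]: positions 0..<m*s (0-indexed); block of position i is i div s;
   i precedes j iff they are in the same block and i <= j. *)

definition rt_le :: "nat \<Rightarrow> nat \<Rightarrow> nat \<Rightarrow> bool" where
  "rt_le s i j \<longleftrightarrow> i div s = j div s \<and> i \<le> j"

definition rt_ideal_gen :: "nat \<Rightarrow> nat \<Rightarrow> nat set \<Rightarrow> nat set" where
  "rt_ideal_gen m s A = {j. j < m * s \<and> (\<exists>i\<in>A. rt_le s j i)}"

definition rt_anti_ideal :: "nat \<Rightarrow> nat \<Rightarrow> nat set \<Rightarrow> bool" where
  "rt_anti_ideal m s J \<longleftrightarrow> J \<subseteq> {..<m * s} \<and>
     (\<forall>i\<in>J. \<forall>j<m * s. rt_le s i j \<longrightarrow> j \<in> J)"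

(* Z_q^n : words over {0..<q} of length n, represented extensionally (zero outside) *)
definition words :: "nat \<Rightarrow> nat \<Rightarrow> (nat \<Rightarrow> nat) set" where
  "words q n = {x. (\<forall>i<n. x i < q) \<and> (\<forall>i\<ge>n. x i = 0)}"

definition d_RT :: "nat \<Rightarrow> nat \<Rightarrow> (nat \<Rightarrow> nat) \<Rightarrow> (nat \<Rightarrow> nat) \<Rightarrow> nat" where
  "d_RT m s x y = card (rt_ideal_gen m s {i. i < m * s \<and> x i \<noteq> y i})"

definition rt_covering :: "nat \<Rightarrow> nat \<Rightarrow> nat \<Rightarrow> nat \<Rightarrow> (nat \<Rightarrow> nat) set \<Rightarrow> bool" where
  "rt_covering q m s R C \<longleftrightarrow> C \<subseteq> words q (m * s) \<and>
     (\<forall>x\<in>words q (m * s). \<exists>c\<in>C. d_RT m s x c \<le> R)"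

definition K_RT :: "nat \<Rightarrow> nat \<Rightarrow> nat \<Rightarrow> nat \<Rightarrow> nat" where
  "K_RT q m s R = (LEAST k. \<exists>C. rt_covering q m s R C \<and> card C = k)"

definition is_OCA :: "nat \<Rightarrow> nat \<Rightarrow> nat \<Rightarrow> nat \<Rightarrow> nat \<Rightarrow> (nat \<Rightarrow> nat \<Rightarrow> nat) \<Rightarrow> bool" where
  "is_OCA N t m s v A \<longleftrightarrow>
     (\<forall>r<N. \<forall>j<m * s. A r j < v) \<and>
     (\<forall>J. rt_anti_ideal m s J \<and> card J = t \<longrightarrow>
        (\<forall>f. (\<forall>j\<in>J. f j < v) \<longrightarrow> (\<exists>r<N. \<forall>j\<in>J. A r j = f j)))"

definition OCAN :: "nat \<Rightarrow> nat \<Rightarrow> nat \<Rightarrow> nat \<Rightarrow> nat" where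
  "OCAN t m s v = (LEAST N. \<exists>A. is_OCA N t m s v A)"

end

theory Submission
  imports Defs
begin

lemma finite_words: "finite (words q n)"
proof -
  let ?L = "{xs. set xs \<subseteq> {..<q} \<and> length xs = n}"
  have "words q n \<subseteq> (\<lambda>xs i. if i < n then xs!i else 0) ` ?L"
  proof
    fix x assume x: "x \<in> words q n"
    have e: "x = (\<lambda>i. if i < n then map x [0..<n] ! i else 0)"
      using x by (intro ext) (simp add: words_def)
    have m: "map x [0..<n] \<in> ?L"
      using x by (auto simp: words_def)
    show "x \<in> (\<lambda>xs i. if i < n then xs!i else 0) ` ?L"
      using e m by (rule image_eqI)
  qed
  moreover have "finite ?L"
    by (rule finite_lists_length_eq) simp
  ultimately show ?thesis by (rule finite_subset[OF _ finite_imageI])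
qed

lemma anti_ideal_shrink:
  "rt_anti_ideal m s J \<Longrightarrow> t \<le> card J \<Longrightarrow> \<exists>J'. J' \<subseteq> J \<and> rt_anti_ideal m s J' \<and> card J' = t"
proof (induction "card J - t" arbitrary: J)
  case 0
  then show ?case by auto
next
  case (Suc k)
  have fin: "finite J" using Suc.prems unfolding rt_anti_ideal_def by (meson finite_lessThan finite_subset)
  have ne: "J \<noteq> {}" using Suc.hyps by auto
  define j0 where "j0 = Min J"
  have j0: "j0 \<in> J" using fin ne by (simp add: j0_def)
  have "rt_anti_ideal m s (J - {j0})"
    unfolding rt_anti_ideal_def
  proof (intro conjI ballI allI impI)
    show "J - {j0} \<subseteq> {..<m * s}" using Suc.prems(1) by (auto simp: rt_anti_ideal_def)
    fix i j assume i: "i \<in> J - {j0}" and j: "j < m * s" and le: "rt_le s i j"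
    have "j \<in> J" using Suc.prems(1) i j le by (auto simp: rt_anti_ideal_def)
    moreover have "j0 \<le> i" using i fin by (simp add: j0_def)
    moreover have "i \<le> j" using le by (simp add: rt_le_def)
    ultimately show "j \<in> J - {j0}" using i by auto
  qed
  moreover have "card (J - {j0}) = card J - 1" using j0 fin by simp
  moreover have "k = card (J - {j0}) - t" using Suc.hyps(2) calculation(2) by simp
  moreover have "t \<le> card (J - {j0})" using Suc.hyps(2) calculation(2) by simp
  ultimately obtain J' where "J' \<subseteq> J - {j0}" "rt_anti_ideal m s J'" "card J' = t"
    using Suc.hyps(1)[of "J - {j0}"] by blast
  then show ?case by blast
qed

lemma OCA_exists: assumes "v > 0" shows "\<exists>N A. is_OCA N t m s v A"
proof -
  obtain h where h: "bij_betw h {0..<card (words v (m*s))} (words v (m*s))"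
    using ex_bij_betw_nat_finite[OF finite_words] by blast
  have "is_OCA (card (words v (m*s))) t m s v h"
    unfolding is_OCA_def
  proof (intro conjI allI impI)
    fix r j assume "r < card (words v (m*s))" "j < m*s"
    then have "h r \<in> words v (m*s)" using h by (auto simp: bij_betw_def)
    then show "h r j < v" using \<open>j < m*s\<close> by (simp add: words_def)
  next
    fix J f assume J: "rt_anti_ideal m s J \<and> card J = t" and f: "\<forall>j\<in>J. f j < v"
    define g where "g = (\<lambda>j. if j \<in> J then f j else 0)"
    have Jsub: "J \<subseteq> {..<m*s}" using J by (simp add: rt_anti_ideal_def)
    have "g \<in> words v (m*s)" unfolding words_def
    proof (intro CollectI conjI allI impI)
      fix i assume "i < m*s" then show "g i < v" using f \<open>v > 0\<close> by (simp add: g_def)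
    next
      fix i assume "m*s \<le> i" then show "g i = 0" using Jsub by (auto simp: g_def)
    qed
    then have "g \<in> h ` {0..<card (words v (m*s))}" using h by (simp add: bij_betw_def)
    then obtain r where "r < card (words v (m*s))" "h r = g" by auto
    then show "\<exists>r<card (words v (m * s)). \<forall>j\<in>J. h r j = f j" by (auto simp: g_def)
  qed
  then show ?thesis by blast
qed

lemma rt_ideal_gen_sub: "rt_ideal_gen m s A \<subseteq> {..<m*s}"
  by (auto simp: rt_ideal_gen_def)

theorem theorem3:
  fixes v q m s R :: nat
  assumes "v \<ge> 2" and "q \<ge> 2" and "m \<ge> 1" and "s \<ge> 1" and "m * s - R \<ge> 2"
  shows "K_RT (v * q) m s R \<le> OCAN (m * s - R) m s v * K_RT q m s R"
proof -
  define n where "n = m * s"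
  define t where "t = n - R"
  have Rn: "R < n" using assms(5) by (simp add: n_def)
  have nt: "n - t = R" using Rn by (simp add: t_def)
  obtain A where A: "is_OCA (OCAN t m s v) t m s v A"
    unfolding OCAN_def using LeastI_ex[OF OCA_exists[of v t m s]] assms(1) by auto
  define N where "N = OCAN t m s v"
  have cex0: "\<exists>C. rt_covering q m s R C \<and> card C = card (words q (m*s))"
  proof (intro exI conjI)
    show "rt_covering q m s R (words q (m*s))"
      unfolding rt_covering_def
    proof (intro conjI ballI)
      fix x assume "x \<in> words q (m*s)"
      moreover have "d_RT m s x x = 0" by (simp add: d_RT_def rt_ideal_gen_def)
      ultimately show "\<exists>c\<in>words q (m * s). d_RT m s x c \<le> R" by force
    qed simp
  qed simp
  have cex: "\<exists>k C. rt_covering q m s R C \<and> card C = k" using cex0 by blast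
  obtain C where C: "rt_covering q m s R C" and cardC: "card C = K_RT q m s R"
    unfolding K_RT_def using LeastI_ex[OF cex] by blast
  define W where "W = (\<lambda>(r, c) j. if j < n then A r j * q + c j else 0)"
  define C' where "C' = W ` ({..<N} \<times> C)"
  have finC: "finite C" using C finite_words unfolding rt_covering_def by (meson finite_subset)
  have cardC': "card C' \<le> N * card C"
    unfolding C'_def using card_image_le[of "{..<N} \<times> C" W] finC by (simp add: card_cartesian_product)
  have Arng: "\<And>r j. r < N \<Longrightarrow> j < n \<Longrightarrow> A r j < v" using A by (simp add: is_OCA_def N_def n_def)
  have cov: "rt_covering (v*q) m s R C'"
    unfolding rt_covering_def
  proof (intro conjI ballI)
    show "C' \<subseteq> words (v*q) (m*s)"
    proof
      fix w assume "w \<in> C'"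
      then obtain r c where rc: "r < N" "c \<in> C" "w = W (r, c)" by (auto simp: C'_def)
      have cw: "c \<in> words q n" using C rc(2) by (auto simp: rt_covering_def n_def)
      show "w \<in> words (v*q) (m*s)" unfolding words_def n_def[symmetric]
      proof (intro CollectI conjI allI impI)
        fix j assume j: "j < n"
        have a: "A r j + 1 \<le> v" using Arng[OF rc(1) j] by simp
        have "c j < q" using cw j by (simp add: words_def)
        then have "A r j * q + c j < A r j * q + q" by simp
        also have "\<dots> = (A r j + 1) * q" by simp
        also have "\<dots> \<le> v * q" using a by (rule mult_right_mono) simp
        finally show "w j < v * q" using rc(3) j by (simp add: W_def)
      next
        fix j assume "n \<le> j" then show "w j = 0" using rc(3) by (simp add: W_def)
      qed
    qed
  next
    fix x assume x: "x \<in> words (v*q) (m*s)"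
    define x1 where "x1 = (\<lambda>j. x j mod q)"
    define x2 where "x2 = (\<lambda>j. x j div q)"
    have x1w: "x1 \<in> words q (m*s)" using x assms(2) by (auto simp: words_def x1_def)
    obtain c where c: "c \<in> C" "d_RT m s x1 c \<le> R" using C x1w by (auto simp: rt_covering_def)
    define D where "D = {i. i < m * s \<and> x1 i \<noteq> c i}"
    define I where "I = rt_ideal_gen m s D"
    have cardI: "card I \<le> R" using c(2) by (simp add: d_RT_def I_def D_def)
    have Isub: "I \<subseteq> {..<n}" using rt_ideal_gen_sub by (simp add: I_def n_def)
    define Jc where "Jc = {..<n} - I"
    have Jc_anti: "rt_anti_ideal m s Jc"
      unfolding rt_anti_ideal_def
    proof (intro conjI ballI allI impI)
      show "Jc \<subseteq> {..<m*s}" by (auto simp: Jc_def n_def)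
      fix i j assume i: "i \<in> Jc" and j: "j < m*s" and le: "rt_le s i j"
      show "j \<in> Jc"
      proof (rule ccontr)
        assume "j \<notin> Jc"
        then have "j \<in> I" using j by (simp add: Jc_def n_def)
        then obtain d where "d \<in> D" "rt_le s j d" by (auto simp: I_def rt_ideal_gen_def)
        then have "rt_le s i d" using le by (auto simp: rt_le_def)
        then have "i \<in> I" using i \<open>d \<in> D\<close> by (auto simp: I_def rt_ideal_gen_def Jc_def n_def)
        then show False using i by (simp add: Jc_def)
      qed
    qed
    have "card Jc = n - card I" using Isub by (simp add: Jc_def card_Diff_subset finite_subset)
    then have "t \<le> card Jc" using cardI by (simp add: t_def)
    then obtain J where J: "J \<subseteq> Jc" "rt_anti_ideal m s J" "card J = t"
      using anti_ideal_shrink[OF Jc_anti] by blast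
    have "\<forall>j\<in>J. x2 j < v"
    proof
      fix j assume "j \<in> J"
      then have "j < n" using J(1) by (auto simp: Jc_def)
      then have "x j < v * q" using x by (simp add: words_def n_def)
      then show "x2 j < v" unfolding x2_def by (simp add: less_mult_imp_div_less)
    qed
    then obtain r where r: "r < N" "\<forall>j\<in>J. A r j = x2 j"
      using A J(2,3) unfolding is_OCA_def N_def t_def n_def by blast
    define w where "w = W (r, c)"
    have wC: "w \<in> C'" using r(1) c(1) by (auto simp: C'_def w_def)
    define D2 where "D2 = {i. i < m * s \<and> x i \<noteq> w i}"
    have D2J: "D2 \<inter> J = {}"
    proof (rule ccontr)
      assume "D2 \<inter> J \<noteq> {}"
      then obtain i where i: "i \<in> D2" "i \<in> J" by blast
      then have iJc: "i \<in> Jc" using J(1) by blast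
      then have "i < n" "i \<notin> I" by (auto simp: Jc_def)
      then have "i \<notin> D" by (auto simp: I_def rt_ideal_gen_def rt_le_def n_def)
      then have "x1 i = c i" using \<open>i < n\<close> by (simp add: D_def n_def)
      then have "w i = x i" using \<open>i < n\<close> r(2) i(2)
        by (simp add: w_def W_def x1_def x2_def) (metis div_mult_mod_eq)
      then show False using i(1) by (simp add: D2_def)
    qed
    have sub: "rt_ideal_gen m s D2 \<subseteq> {..<n} - J"
    proof
      fix j assume "j \<in> rt_ideal_gen m s D2"
      then obtain i where j: "j < m*s" "i \<in> D2" "rt_le s j i" by (auto simp: rt_ideal_gen_def)
      have "j \<notin> J"
      proof
        assume "j \<in> J"
        then have "i \<in> J" using J(2) j by (auto simp: rt_anti_ideal_def D2_def)
        then show False using D2J j(2) by blast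
      qed
      then show "j \<in> {..<n} - J" using j by (simp add: n_def)
    qed
    have Jn: "J \<subseteq> {..<n}" using J(2) by (simp add: rt_anti_ideal_def n_def)
    have "card (rt_ideal_gen m s D2) \<le> card ({..<n} - J)" using sub by (intro card_mono) auto
    also have "\<dots> = n - t" using Jn J(3) by (simp add: card_Diff_subset finite_subset)
    finally have "d_RT m s x w \<le> R" using nt by (simp add: d_RT_def D2_def)
    then show "\<exists>c\<in>C'. d_RT m s x c \<le> R" using wC by blast
  qed
  have "K_RT (v * q) m s R \<le> card C'"
    unfolding K_RT_def using cov by (intro Least_le) blast
  also have "\<dots> \<le> N * card C" by (rule cardC')
  finally show ?thesis by (simp add: N_def t_def n_def cardC)
qed

end
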